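(* Let $z\in(0,1)\setminus\mathbb{Q}$ and suppose $z\in[r_1,r_2]$ for rationals $r_1,r_2\in(0,1)$ whose continued fraction expansions have one of the two forms $$\text{(i)}\quad r_1=[(2)^{2k-1},(2,1)^\ell,s,a_1,\dots,a_{n_1},\infty],\qquad r_2=[(2)^{2k-1},b_1,\dots,b_{n_2},\infty],$$ $$\text{(ii)}\quad r_1=[(2)^{2k},a_1,\dots,a_{n_1},\infty],\qquad r_2=[(2)^{2k},(2,1)^\ell,s,b_1,\dots,b_{n_2},\infty],$$ where $k\ge1$, $\ell\ge0$, $s\ge3$ are integers and $a_i,b_i$ are positive integers ($n_1,n_2\ge 0$). Then $z\notin\mathcal{B}_2$.
   Context: For irrational $x\in(0,1)$, $x=[a_1(x),a_2(x),\dots]$ denotes its simple continued fraction expansion. For positive integers $c_1,\dots,c_n$, $[c_1,\dots,c_n,\infty]$ denotes the rational number $\cfrac{1}{c_1+\cfrac{1}{\ddots+\cfrac{1}{c_n}}}$. The notation $(c_1,\dots,c_m)^\ell$ denotes the block $c_1,\dots,c_m$ repeated $\ell$ times (empty if $\ell=0$), and $(c)^\ell$ denotes $c$ repeated $\ell$ times. $\mathcal{B}_2$ is the set of irrational $x\in(0,1)$ with $a_k(x)\le2$ for all $k\ge1$. *)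

theory Defs
  imports Complex_Main
begin

definition gauss_map :: "real \<Rightarrow> real" where
  "gauss_map x = 1 / x - of_int \<lfloor>1 / x\<rfloor>"

text \<open>k-th partial quotient a_k(x) (k \<ge> 1) of the simple continued fraction of x in (0,1).\<close>
definition cf_digit :: "real \<Rightarrow> nat \<Rightarrow> int" where
  "cf_digit x k = \<lfloor>1 / (gauss_map ^^ (k - 1)) x\<rfloor>"

definition B2 :: "real set" where
  "B2 = {x. 0 < x \<and> x < 1 \<and> x \<notin> \<rat> \<and> (\<forall>k\<ge>1. cf_digit x k \<le> 2)}"

text \<open>Finite continued fraction [c_1,...,c_n,\<infinity>] = 1/(c_1 + 1/(... + 1/c_n)); [\<infinity>] = 0.\<close>
fun cf_fin :: "nat list \<Rightarrow> real" where
  "cf_fin [] = 0"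
| "cf_fin (c # cs) = 1 / (real c + cf_fin cs)"

end

theory Submission
  imports Defs
begin

lemma B2_step:
  assumes "z \<in> B2"
  shows "\<exists>d::int. (d = 1 \<or> d = 2) \<and> 1 / z = d + gauss_map z \<and> gauss_map z \<in> B2"
proof -
  from assms have z: "0 < z" "z < 1" "z \<notin> \<rat>" "\<forall>k\<ge>1. cf_digit z k \<le> 2"
    by (auto simp: B2_def)
  define d where "d = \<lfloor>1 / z\<rfloor>"
  have "1 < 1 / z" using z by simp
  hence d1: "d \<ge> 1" unfolding d_def by linarith
  have "cf_digit z 1 \<le> 2" using z by auto
  hence d2: "d \<le> 2" by (simp add: cf_digit_def d_def)
  have eq: "1 / z = d + gauss_map z" by (simp add: gauss_map_def d_def)
  have g0: "0 \<le> gauss_map z" "gauss_map z < 1" unfolding gauss_map_def by linarith+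
  have gq: "gauss_map z \<notin> \<rat>"
  proof
    assume "gauss_map z \<in> \<rat>"
    hence "1 / z \<in> \<rat>" using eq by (simp add: Rats_add)
    hence "1 / (1 / z) \<in> \<rat>" by (rule Rats_divide[OF Rats_1])
    thus False using z by simp
  qed
  hence "gauss_map z \<noteq> 0" by auto
  with g0 have gpos: "0 < gauss_map z" by simp
  have dig: "\<forall>k\<ge>1. cf_digit (gauss_map z) k \<le> 2"
  proof (intro allI impI)
    fix k :: nat assume "k \<ge> 1"
    have "cf_digit (gauss_map z) k = cf_digit z (k+1)"
      unfolding cf_digit_def using \<open>k \<ge> 1\<close>
      by (metis Suc_diff_le Suc_eq_plus1 diff_Suc_1 funpow_Suc_right o_apply)
    thus "cf_digit (gauss_map z) k \<le> 2" using z by simp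
  qed
  have "gauss_map z \<in> B2" using gpos g0 gq dig by (simp add: B2_def)
  moreover have "d = 1 \<or> d = 2" using d1 d2 by linarith
  ultimately show ?thesis using eq by blast
qed

lemma B2_bounds: "z \<in> B2 \<Longrightarrow> 0 < z \<and> z < 1" by (simp add: B2_def)

lemma cf_fin_bounds: "\<forall>a\<in>set xs. a \<ge> 1 \<Longrightarrow> 0 \<le> cf_fin xs \<and> cf_fin xs \<le> 1"
proof (induction xs)
  case Nil then show ?case by simp
next
  case (Cons a xs)
  hence "0 \<le> cf_fin xs" "real a \<ge> 1" by auto
  hence "1 \<le> real a + cf_fin xs" by linarith
  thus ?case by (simp add: divide_le_eq_1)
qed

lemma forbidden:
  assumes "s \<ge> 3" "\<forall>c\<in>set cs. c \<ge> 1"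
  shows "z \<in> B2 \<Longrightarrow> cf_fin (concat (replicate l [2,1]) @ s # cs) < z"
proof (induction l arbitrary: z)
  case 0
  obtain d :: int where d: "d = 1 \<or> d = 2" "1 / z = d + gauss_map z" "gauss_map z \<in> B2"
    using B2_step[OF 0] by blast
  have "gauss_map z < 1" using B2_bounds[OF d(3)] by simp
  hence lt: "1 / z < 3" using d by auto
  have "0 \<le> cf_fin cs" using cf_fin_bounds assms(2) by blast
  hence ge: "3 \<le> real s + cf_fin cs" using assms(1) by simp
  have zp: "0 < z" using B2_bounds[OF 0] by simp
  have "1 / (real s + cf_fin cs) \<le> 1 / 3" using ge by (simp add: divide_le_eq)
  also have "1/3 < z" using lt zp by (simp add: divide_less_eq mult.commute)
  finally show ?case by simp
next
  case (Suc l)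
  define R where "R = cf_fin (concat (replicate l [2,1]) @ s # cs)"
  have R01: "0 \<le> R \<and> R \<le> 1" unfolding R_def
    by (rule cf_fin_bounds) (use assms in auto)
  have val: "cf_fin (concat (replicate (Suc l) [2,1]) @ s # cs) = 1 / (2 + 1 / (1 + R))"
    by (simp add: R_def)
  have zp: "0 < z" using B2_bounds[OF Suc.prems] by simp
  obtain d :: int where d: "d = 1 \<or> d = 2" "1 / z = d + gauss_map z" "gauss_map z \<in> B2"
    using B2_step[OF Suc.prems] by blast
  have key: "1 / z < 2 + 1 / (1 + R)"
  proof (cases "d = 1")
    case True
    have "gauss_map z < 1" using B2_bounds[OF d(3)] by simp
    moreover have "0 < 1 / (1 + R)" using R01 by simp
    ultimately show ?thesis using d True by linarith
  next
    case False
    hence d2: "d = 2" using d by simp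
    let ?t = "gauss_map z"
    obtain e :: int where e: "e = 1 \<or> e = 2" "1 / ?t = e + gauss_map ?t" "gauss_map ?t \<in> B2"
      using B2_step[OF d(3)] by blast
    have tp: "0 < ?t" using B2_bounds[OF d(3)] by simp
    have ttp: "0 < gauss_map ?t" using B2_bounds[OF e(3)] by simp
    have "1 + R < 1 / ?t"
    proof (cases "e = 1")
      case True
      have "R < gauss_map ?t" using Suc.IH[OF e(3)] by (simp add: R_def)
      thus ?thesis using e True by simp
    next
      case False
      thus ?thesis using e R01 ttp by auto
    qed
    hence "?t < 1 / (1 + R)" using tp R01
      by (simp add: less_divide_eq divide_less_eq mult.commute)
    thus ?thesis using d d2 by simp
  qed
  have pos: "0 < 2 + 1 / (1 + R)" using R01 by (simp add: add_pos_nonneg)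
  have "1 / (2 + 1 / (1 + R)) < z"
    using key zp pos by (simp add: divide_less_eq less_divide_eq mult.commute)
  thus ?case using val by simp
qed

definition h :: "nat \<Rightarrow> real \<Rightarrow> real" where
  "h n = ((\<lambda>x. 1 / (2 + x)) ^^ n)"

lemma h_Suc: "h (Suc n) t = 1 / (2 + h n t)"
  by (simp add: h_def)

lemma h_0: "h 0 t = t" by (simp add: h_def)

lemma cf_fin_rep: "cf_fin (replicate n 2 @ xs) = h n (cf_fin xs)"
  by (induction n) (simp_all add: h_Suc h_0)

lemma h_bounds: "0 \<le> t \<Longrightarrow> t \<le> 1 \<Longrightarrow> 0 \<le> h n t \<and> h n t \<le> 1"
proof (induction n)
  case 0 then show ?case by (simp add: h_0)
next
  case (Suc n)
  hence "0 \<le> h n t" by simp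
  thus ?case by (simp add: h_Suc divide_le_eq_1)
qed

lemma core:
  "z \<in> B2 \<Longrightarrow> 0 \<le> u \<Longrightarrow> u \<le> 1 \<Longrightarrow> 0 \<le> c \<Longrightarrow> c \<le> 1 \<Longrightarrow> (\<forall>t\<in>B2. c < t) \<Longrightarrow>
   (if even n then h n u \<le> z \<and> z \<le> h n c else h n c \<le> z \<and> z \<le> h n u) \<Longrightarrow> False"
proof (induction n arbitrary: z)
  case 0
  then show ?case by (auto simp: h_0)
next
  case (Suc n)
  obtain d :: int where d: "d = 1 \<or> d = 2" "1 / z = d + gauss_map z" "gauss_map z \<in> B2"
    using B2_step[OF Suc.prems(1)] by blast
  have zp: "0 < z" using B2_bounds[OF Suc.prems(1)] by simp
  have tb: "0 < gauss_map z" "gauss_map z < 1" using B2_bounds[OF d(3)] by auto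
  have hu: "0 \<le> h n u" "h n u \<le> 1" using h_bounds Suc.prems(2,3) by auto
  have hc: "0 \<le> h n c" "h n c \<le> 1" using h_bounds Suc.prems(4,5) by auto
  have inv1: "\<And>a. 0 \<le> a \<Longrightarrow> (1 / (2 + a) \<le> z \<longleftrightarrow> 1 / z \<le> 2 + a)"
  proof -
    fix a :: real assume "0 \<le> a"
    hence "0 < 2 + a" by simp
    thus "(1 / (2 + a) \<le> z \<longleftrightarrow> 1 / z \<le> 2 + a)" using zp
      by (simp add: divide_le_eq le_divide_eq mult.commute)
  qed
  have inv2: "\<And>a. 0 \<le> a \<Longrightarrow> (z \<le> 1 / (2 + a) \<longleftrightarrow> 2 + a \<le> 1 / z)"
  proof -
    fix a :: real assume "0 \<le> a"
    hence "0 < 2 + a" by simp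
    thus "(z \<le> 1 / (2 + a) \<longleftrightarrow> 2 + a \<le> 1 / z)" using zp
      by (simp add: divide_le_eq le_divide_eq mult.commute)
  qed
  show ?case
  proof (cases "even n")
    case True
    hence ev: "\<not> even (Suc n)" by simp
    have P: "h (Suc n) c \<le> z \<and> z \<le> h (Suc n) u" using Suc.prems(7) ev by simp
    hence "1 / z \<le> 2 + h n c" "2 + h n u \<le> 1 / z"
      using inv1[OF hc(1)] inv2[OF hu(1)] unfolding h_Suc by auto
    moreover have "d = 2" using d hu hc tb calculation by auto
    ultimately have "h n u \<le> gauss_map z \<and> gauss_map z \<le> h n c" using d(2) by simp
    hence "if even n then h n u \<le> gauss_map z \<and> gauss_map z \<le> h n c
           else h n c \<le> gauss_map z \<and> gauss_map z \<le> h n u" using True by simp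
    thus False using Suc.IH[OF d(3) Suc.prems(2-6)] by blast
  next
    case False
    hence ev: "even (Suc n)" by simp
    have P: "h (Suc n) u \<le> z \<and> z \<le> h (Suc n) c" using Suc.prems(7) ev by simp
    hence "1 / z \<le> 2 + h n u" "2 + h n c \<le> 1 / z"
      using inv1[OF hu(1)] inv2[OF hc(1)] unfolding h_Suc by auto
    moreover have "d = 2" using d hu hc tb calculation by auto
    ultimately have "h n c \<le> gauss_map z \<and> gauss_map z \<le> h n u" using d(2) by simp
    hence "if even n then h n u \<le> gauss_map z \<and> gauss_map z \<le> h n c
           else h n c \<le> gauss_map z \<and> gauss_map z \<le> h n u" using False by simp
    thus False using Suc.IH[OF d(3) Suc.prems(2-6)] by blast
  qed
qed

theorem mainTheorem5:
  fixes z r1 r2 :: real and k l s :: nat and as bs :: "nat list"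
  assumes "0 < z" "z < 1" "z \<notin> \<rat>"
    and "r1 \<in> \<rat>" "r2 \<in> \<rat>" "0 < r1" "r1 < 1" "0 < r2" "r2 < 1"
    and "r1 \<le> z" "z \<le> r2"
    and "k \<ge> 1" "s \<ge> 3"
    and "\<forall>a\<in>set as. a \<ge> 1" "\<forall>b\<in>set bs. b \<ge> 1"
    and "(r1 = cf_fin (replicate (2*k - 1) 2 @ concat (replicate l [2,1]) @ [s] @ as) \<and>
          r2 = cf_fin (replicate (2*k - 1) 2 @ bs))
       \<or> (r1 = cf_fin (replicate (2*k) 2 @ as) \<and>
          r2 = cf_fin (replicate (2*k) 2 @ concat (replicate l [2,1]) @ [s] @ bs))"
  shows "z \<notin> B2"
proof
  assume zB: "z \<in> B2"
  from assms(16) show False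
  proof
    assume H: "r1 = cf_fin (replicate (2*k - 1) 2 @ concat (replicate l [2,1]) @ [s] @ as) \<and>
          r2 = cf_fin (replicate (2*k - 1) 2 @ bs)"
    define c where "c = cf_fin (concat (replicate l [2,1]) @ s # as)"
    define u where "u = cf_fin bs"
    have c01: "0 \<le> c \<and> c \<le> 1" unfolding c_def
      by (rule cf_fin_bounds) (use assms in auto)
    have u01: "0 \<le> u \<and> u \<le> 1" unfolding u_def by (rule cf_fin_bounds) (use assms in auto)
    have cl: "\<forall>t\<in>B2. c < t" unfolding c_def using forbidden assms by blast
    have odd: "\<not> even (2*k - 1)" using assms(12) by simp
    have "h (2*k-1) c \<le> z \<and> z \<le> h (2*k-1) u"
      using H assms(10,11) by (simp add: cf_fin_rep c_def u_def)
    thus False using core[OF zB _ _ _ _ cl, of u "2*k-1"] c01 u01 odd by auto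
  next
    assume H: "r1 = cf_fin (replicate (2*k) 2 @ as) \<and>
          r2 = cf_fin (replicate (2*k) 2 @ concat (replicate l [2,1]) @ [s] @ bs)"
    define c where "c = cf_fin (concat (replicate l [2,1]) @ s # bs)"
    define u where "u = cf_fin as"
    have c01: "0 \<le> c \<and> c \<le> 1" unfolding c_def
      by (rule cf_fin_bounds) (use assms in auto)
    have u01: "0 \<le> u \<and> u \<le> 1" unfolding u_def by (rule cf_fin_bounds) (use assms in auto)
    have cl: "\<forall>t\<in>B2. c < t" unfolding c_def using forbidden assms by blast
    have "h (2*k) u \<le> z \<and> z \<le> h (2*k) c"
      using H assms(10,11) by (simp add: cf_fin_rep c_def u_def)
    thus False using core[OF zB _ _ _ _ cl, of u "2*k"] c01 u01 by auto
  qed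
qed

end
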